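(* Every $p$-stabilisation $\alpha_I$ of $\Pi$ which is of non-critical slope (i.e. $r_I<\#\mathrm{Crit}(\Pi)$) is of Shalika type.
   Context: Let $p$ be an odd prime and $n\ge 1$. Fix an isomorphism $\overline{\mathbb{Q}}_p\cong\mathbb{C}$; $v_p$ denotes the $p$-adic valuation on $\mathbb{C}_p$ normalised by $v_p(p)=1$. Let $\Pi$ be a cuspidal automorphic representation of $\mathrm{GL}_{2n}(\mathbb{A}_{\mathbb{Q}})$ which is cohomological with respect to an integral weight $\mu=(\mu_1,\dots,\mu_{2n})\in\mathbb{Z}^{2n}$, which is the transfer of a globally generic cuspidal automorphic representation of $\mathrm{GSpin}_{2n+1}(\mathbb{A}_{\mathbb{Q}})$, and which is unramified at $p$. Then $\mu$ is dominant ($\mu_1\ge\cdots\ge\mu_{2n}$) and pure: there is an integer $w$ (the purity weight) with $\mu_i+\mu_{2n+1-i}=w$ for all $i$. The Hodge–Tate weights are $h_i=\mu_i+2n-i$ ($1\le i\le 2n$). Set $\mathrm{Crit}(\Pi)=\{j\in\mathbb{Z}:\mu_n\ge j\ge\mu_{n+1}\}$, so $\#\mathrm{Crit}(\Pi)=h_n-h_{n+1}$. Write $\Pi_p\cong\mathrm{Ind}_{B(\mathbb{Q}_p)}^{\mathrm{GL}_{2n}(\mathbb{Q}_p)}(|\cdot|^{(2n-1)/2}\lambda_p)$ (normalised parabolic induction from the upper triangular Borel $B$) for an unramified character $\lambda_p$ of the diagonal torus; the Satake parameters are $\alpha_i=\lambda_{p,i}(p)$, where $\lambda_{p,i}$ is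 the $i$-th diagonal component. They are indexed so that $v_p(\alpha_1)\ge\cdots\ge v_p(\alpha_{2n})$ and $\alpha_i\alpha_{2n+1-i}=\lambda$ for all $i$, for a fixed $\lambda$ with $v_p(\lambda)=2n-1+w$ (possible by the transfer from $\mathrm{GSpin}_{2n+1}$). Known fact (Hida), used freely: the Newton polygon (the piecewise linear curve through $(0,0)$ and $(j,\sum_{i=1}^{j}v_p(\alpha_{2n+1-i}))$, $j=1,\dots,2n$) lies on or above the Hodge polygon (through $(0,0)$ and $(j,\sum_{i=1}^{j}h_{2n+1-i})$, $j=1,\dots,2n$), and their endpoints coincide. For $I=(i_1,\dots,i_n)$ with $1\le i_1<\dots<i_n\le 2n$ put $\alpha_I=\alpha_{i_1}\cdots\alpha_{i_n}$ (a "$p$-stabilisation") and $r_I=v_p(\alpha_I)-\sum_{i=n+1}^{2n}h_i$. $\alpha_I$ is of Shalika type if $I$ contains exactly one element of each pair $\{i,2n+1-i\}$, $i=1,\dots,n$; it is of non-critical slope if $r_I<\#\mathrm{Crit}(\Pi)$. *)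

theory Defs
  imports Complex_Main "HOL-Computational_Algebra.Primes"
begin

text \<open>Indices run over 1..2n. Weights are integer-valued functions on indices.\<close>

definition hodge_wt :: "nat \<Rightarrow> (nat \<Rightarrow> int) \<Rightarrow> nat \<Rightarrow> int" where
  "hodge_wt n \<mu> i = \<mu> i + int (2*n) - int i"

definition Crit :: "nat \<Rightarrow> (nat \<Rightarrow> int) \<Rightarrow> int set" where
  "Crit n \<mu> = {j. \<mu> n \<ge> j \<and> j \<ge> \<mu> (n+1)}"

definition stabilisation_sets :: "nat \<Rightarrow> nat set set" where
  "stabilisation_sets n = {I. I \<subseteq> {1..2*n} \<and> card I = n}"

definition alpha_I :: "(nat \<Rightarrow> complex) \<Rightarrow> nat set \<Rightarrow> complex" where
  "alpha_I \<alpha> I = (\<Prod>i\<in>I. \<alpha> i)"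

definition slope_r :: "(complex \<Rightarrow> real) \<Rightarrow> (nat \<Rightarrow> complex) \<Rightarrow> nat \<Rightarrow> (nat \<Rightarrow> int) \<Rightarrow> nat set \<Rightarrow> real" where
  "slope_r v \<alpha> n \<mu> I = v (alpha_I \<alpha> I) - (\<Sum>i = n+1..2*n. real_of_int (hodge_wt n \<mu> i))"

definition non_critical_slope :: "(complex \<Rightarrow> real) \<Rightarrow> (nat \<Rightarrow> complex) \<Rightarrow> nat \<Rightarrow> (nat \<Rightarrow> int) \<Rightarrow> nat set \<Rightarrow> bool" where
  "non_critical_slope v \<alpha> n \<mu> I \<longleftrightarrow> slope_r v \<alpha> n \<mu> I < real (card (Crit n \<mu>))"

definition shalika_type :: "nat \<Rightarrow> nat set \<Rightarrow> bool" where
  "shalika_type n I \<longleftrightarrow> (\<forall>i\<in>{1..n}. card (I \<inter> {i, 2*n+1-i}) = 1)"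

end

theory Submission
  imports Defs
begin

lemma sum_smallest:
  fixes f :: "nat \<Rightarrow> real"
  assumes mono: "\<And>i j. 1 \<le> i \<Longrightarrow> i \<le> j \<Longrightarrow> j \<le> N \<Longrightarrow> f j \<le> f i"
  shows "J \<subseteq> {1..N} \<Longrightarrow> sum f {N - card J + 1..N} \<le> sum f J"
  using mono
proof (induction N arbitrary: J)
  case 0
  then show ?case by auto
next
  case (Suc N)
  have fin: "finite J" using Suc.prems(1) finite_subset by blast
  have cJ: "card J \<le> Suc N" using card_mono[OF _ Suc.prems(1)] by simp
  have mono': "\<And>i j. 1 \<le> i \<Longrightarrow> i \<le> j \<Longrightarrow> j \<le> N \<Longrightarrow> f j \<le> f i" using Suc.prems(2) by simp
  show ?case
  proof (cases "Suc N \<in> J")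
    case False
    hence sub: "J \<subseteq> {1..N}" using Suc.prems(1) by (force simp: subset_eq le_Suc_eq)
    hence cJ': "card J \<le> N" using card_mono[OF _ sub] by simp
    have IH: "sum f {N - card J + 1..N} \<le> sum f J" using Suc.IH[OF sub mono'] .
    have "sum f {Suc N - card J + 1..Suc N} = sum (\<lambda>i. f (Suc i)) {N - card J + 1..N}"
      using cJ' by (metis Suc_diff_le Suc_eq_plus1 sum.shift_bounds_cl_Suc_ivl)
    also have "\<dots> \<le> sum f {N - card J + 1..N}"
      by (rule sum_mono) (use Suc.prems(2) in auto)
    finally show ?thesis using IH by linarith
  next
    case True
    define J' where "J' = J - {Suc N}"
    have sub: "J' \<subseteq> {1..N}" using Suc.prems(1) unfolding J'_def by auto
    have cJ': "card J' = card J - 1" unfolding J'_def using True fin by simp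
    have pos: "card J \<ge> 1" using True fin card_0_eq by fastforce
    have IH: "sum f {N - card J' + 1..N} \<le> sum f J'" using Suc.IH[OF sub mono'] .
    have e1: "N - card J' + 1 = Suc N - card J + 1" using cJ' pos cJ by simp
    have "sum f {Suc N - card J + 1..Suc N} = f (Suc N) + sum f {Suc N - card J + 1..N}"
    proof -
      have "{Suc N - card J + 1..Suc N} = insert (Suc N) {Suc N - card J + 1..N}" using pos by auto
      then show ?thesis by simp
    qed
    also have "\<dots> \<le> f (Suc N) + sum f J'" using IH e1 by simp
    also have "\<dots> = sum f J" unfolding J'_def using True fin
      by (simp add: sum.remove)
    finally show ?thesis .
  qed
qed

lemma reidx:
  fixes g :: "nat \<Rightarrow> real"
  shows "j \<le> M \<Longrightarrow> (\<Sum>i=1..j. g (M+1-i)) = sum g {M+1-j..M}"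
proof (induction j)
  case 0 then show ?case by simp
next
  case (Suc j)
  have "{M+1-Suc j..M} = insert (M - j) {M+1-j..M}" using Suc.prems by auto
  moreover have "M - j \<notin> {M+1-j..M}" using Suc.prems by auto
  ultimately show ?case using Suc by simp
qed

lemma v_prod:
  fixes v :: "complex \<Rightarrow> real"
  assumes v_mult: "\<And>x y. x \<noteq> 0 \<Longrightarrow> y \<noteq> 0 \<Longrightarrow> v (x * y) = v x + v y"
  shows "finite A \<Longrightarrow> A \<noteq> {} \<Longrightarrow> (\<forall>i\<in>A. \<alpha> i \<noteq> 0) \<Longrightarrow> v (\<Prod>i\<in>A. \<alpha> i) = (\<Sum>i\<in>A. v (\<alpha> i))"
proof (induction A rule: finite_ne_induct)
  case (singleton x) then show ?case by simp
next
  case (insert x F)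
  have "(\<Prod>i\<in>F. \<alpha> i) \<noteq> 0" using insert by (simp add: prod_zero_iff)
  then show ?case using insert v_mult by simp
qed


theorem mainTheorem2:
  fixes p n :: nat and \<mu> :: "nat \<Rightarrow> int" and w :: int
    and \<alpha> :: "nat \<Rightarrow> complex" and lam :: complex and v :: "complex \<Rightarrow> real"
  assumes p: "prime p" "odd p"
    and n: "n \<ge> 1"
    and v_mult: "\<And>x y. x \<noteq> 0 \<Longrightarrow> y \<noteq> 0 \<Longrightarrow> v (x * y) = v x + v y"
    and v_ultra: "\<And>x y. x \<noteq> 0 \<Longrightarrow> y \<noteq> 0 \<Longrightarrow> x + y \<noteq> 0 \<Longrightarrow> v (x + y) \<ge> min (v x) (v y)"
    and v_p: "v (of_nat p) = 1"
    and dominant: "\<And>i j. 1 \<le> i \<Longrightarrow> i \<le> j \<Longrightarrow> j \<le> 2*n \<Longrightarrow> \<mu> i \<ge> \<mu> j"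
    and pure: "\<And>i. i \<in> {1..2*n} \<Longrightarrow> \<mu> i + \<mu> (2*n+1-i) = w"
    and alpha_nz: "\<And>i. i \<in> {1..2*n} \<Longrightarrow> \<alpha> i \<noteq> 0"
    and val_order: "\<And>i j. 1 \<le> i \<Longrightarrow> i \<le> j \<Longrightarrow> j \<le> 2*n \<Longrightarrow> v (\<alpha> i) \<ge> v (\<alpha> j)"
    and pairing: "\<And>i. i \<in> {1..2*n} \<Longrightarrow> \<alpha> i * \<alpha> (2*n+1-i) = lam"
    and lambda_nz: "lam \<noteq> 0"
    and v_lambda: "v lam = real_of_int (int (2*n) - 1 + w)"
    and newton_hodge: "\<And>j. j \<in> {1..2*n} \<Longrightarrow>
          (\<Sum>i=1..j. v (\<alpha> (2*n+1-i))) \<ge> (\<Sum>i=1..j. real_of_int (hodge_wt n \<mu> (2*n+1-i)))"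
    and endpoints: "(\<Sum>i=1..2*n. v (\<alpha> (2*n+1-i))) = (\<Sum>i=1..2*n. real_of_int (hodge_wt n \<mu> (2*n+1-i)))"
  shows "\<forall>I\<in>stabilisation_sets n. non_critical_slope v \<alpha> n \<mu> I \<longrightarrow> shalika_type n I"
proof (intro ballI impI)
  fix I assume IS: "I \<in> stabilisation_sets n" and NC: "non_critical_slope v \<alpha> n \<mu> I"
  have Isub: "I \<subseteq> {1..2*n}" and cI: "card I = n" using IS unfolding stabilisation_sets_def by auto
  have finI: "finite I" using Isub finite_subset by blast
  define P where "P k = {k, 2*n+1-k}" for k
  show "shalika_type n I"
  proof (rule ccontr)
    assume NS: "\<not> shalika_type n I"
    then obtain i0 where i0: "i0 \<in> {1..n}" "card (I \<inter> P i0) \<noteq> 1"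
      unfolding shalika_type_def P_def by auto
    have "\<exists>k\<in>{1..n}. P k \<subseteq> I"
    proof (rule ccontr)
      assume H: "\<not> (\<exists>k\<in>{1..n}. P k \<subseteq> I)"
      have le1: "card (I \<inter> P k) \<le> 1" if "k \<in> {1..n}" for k
      proof -
        have "\<not> P k \<subseteq> I" using H that by blast
        then have "I \<inter> P k \<subseteq> {k} \<or> I \<inter> P k \<subseteq> {2*n+1-k}" unfolding P_def by auto
        then show ?thesis using card_mono[of "{k}" "I \<inter> P k"] card_mono[of "{2*n+1-k}" "I \<inter> P k"] by auto
      qed
      have Ieq: "I = (\<Union>k\<in>{1..n}. I \<inter> P k)"
      proof
        show "I \<subseteq> (\<Union>k\<in>{1..n}. I \<inter> P k)"
        proof
          fix i assume "i \<in> I"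
          then have "i \<in> {1..2*n}" using Isub by auto
          then show "i \<in> (\<Union>k\<in>{1..n}. I \<inter> P k)"
          proof (cases "i \<le> n")
            case True then show ?thesis using \<open>i \<in> I\<close> \<open>i \<in> {1..2*n}\<close> unfolding P_def by auto
          next
            case False
            then have "2*n+1-i \<in> {1..n}" "2*n+1-(2*n+1-i) = i" using \<open>i \<in> {1..2*n}\<close> by auto
            then show ?thesis using \<open>i \<in> I\<close> unfolding P_def by (intro UN_I[of "2*n+1-i"]) auto
          qed
        qed
      qed auto
      have "card I = (\<Sum>k\<in>{1..n}. card (I \<inter> P k))"
        apply (subst Ieq)
        apply (rule card_UN_disjoint)
        using finI apply auto[2]
        unfolding P_def by auto
      also have "\<dots> < (\<Sum>k\<in>{1..n}. 1)"
        apply (rule sum_strict_mono_ex1)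
        using le1 apply auto[2]
        apply (rule bexI[of _ i0]) using le1[OF i0(1)] i0 by auto
      finally show False using cI by simp
    qed
    then obtain k where k: "k \<in> {1..n}" "k \<in> I" "2*n+1-k \<in> I" unfolding P_def by auto
    define k' where "k' = 2*n+1-k"
    have kk': "k \<noteq> k'" "k' \<in> {1..2*n}" "k \<in> {1..2*n}" using k unfolding k'_def by auto
    have n2: "n \<ge> 2"
    proof (rule ccontr)
      assume "\<not> n \<ge> 2" then have "n = 1" using n by simp
      have "{k, k'} \<subseteq> I" using k k'_def by auto
      then have "card {k, k'} \<le> card I" using card_mono[OF finI] by blast
      then show False using kk' cI \<open>n=1\<close> by simp
    qed
    define a where "a i = v (\<alpha> i)" for i
    define h where "h i = real_of_int (hodge_wt n \<mu> i)" for i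
    define J where "J = I - {k, k'}"
    have Jsub: "J \<subseteq> {1..2*n}" using Isub J_def by auto
    have cJ: "card J = n - 2" unfolding J_def using k cI finI kk' k'_def by (simp add: card_Diff_subset)
    have amono: "\<And>i j. 1 \<le> i \<Longrightarrow> i \<le> j \<Longrightarrow> j \<le> 2*n \<Longrightarrow> a j \<le> a i"
      using val_order unfolding a_def by auto
    have S1: "sum a {2*n - card J + 1..2*n} \<le> sum a J" by (rule sum_smallest[OF amono Jsub])
    have e: "2*n - card J + 1 = n+3" using cJ n2 by simp
    have S2: "sum h {n+3..2*n} \<le> sum a {n+3..2*n}"
    proof (cases "n = 2")
      case True then show ?thesis by simp
    next
      case False
      then have j: "n - 2 \<in> {1..2*n}" using n2 by auto
      have "2*n+1-(n-2) = n+3" using n2 by simp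
      then show ?thesis using newton_hodge[OF j] reidx[of "n-2" "2*n" a] reidx[of "n-2" "2*n" h]
        unfolding a_def h_def by simp
    qed
    have nzI: "\<forall>i\<in>I. \<alpha> i \<noteq> 0" using alpha_nz Isub by auto
    have vI: "v (alpha_I \<alpha> I) = sum a I"
      unfolding alpha_I_def a_def using v_prod[of v, OF v_mult finI _ nzI] k by auto
    have sumI: "sum a I = a k + a k' + sum a J"
    proof -
      have "I = insert k (insert k' J)" using k J_def k'_def by auto
      moreover have "k \<notin> insert k' J" "k' \<notin> J" using kk' J_def by auto
      moreover have "finite J" using finI J_def by simp
      ultimately show ?thesis by (metis add.assoc sum.insert finite_insert)
    qed
    have "\<alpha> k * \<alpha> k' = lam" using pairing[OF kk'(3)] k'_def by simp
    then have "a k + a k' = v lam" unfolding a_def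
      using v_mult[OF alpha_nz[OF kk'(3)] alpha_nz[OF kk'(2)]] by simp
    then have akk: "a k + a k' = real_of_int (int (2*n) - 1 + w)" using v_lambda by simp
    have pn: "\<mu> n + \<mu> (n+1) = w" using pure[of n] n by (simp add: mult_2)
    have hn: "h n = real_of_int (\<mu> n + int n)" "h (n+1) = real_of_int (\<mu> (n+1) + int n - 1)"
      "h (n+2) = real_of_int (\<mu> (n+2) + int n - 2)"
      unfolding h_def hodge_wt_def by auto
    have dom1: "\<mu> (n+1) \<le> \<mu> n" "\<mu> (n+2) \<le> \<mu> (n+1)" using dominant n n2 by auto
    have Hlow: "(\<Sum>i = n+1..2*n. h i) = h (n+1) + h (n+2) + sum h {n+3..2*n}"
    proof -
      have "{n+1..2*n} = insert (n+1) (insert (n+2) {n+3..2*n})" using n2 by auto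
      then show ?thesis by simp
    qed
    have cCrit: "card (Crit n \<mu>) = nat (\<mu> n - \<mu> (n+1) + 1)"
    proof -
      have "Crit n \<mu> = {\<mu> (n+1)..\<mu> n}" unfolding Crit_def by auto
      then show ?thesis by simp
    qed
    have r: "slope_r v \<alpha> n \<mu> I = sum a I - (\<Sum>i = n+1..2*n. h i)"
      unfolding slope_r_def h_def vI by simp
    have "real (card (Crit n \<mu>)) = real_of_int (\<mu> n - \<mu> (n+1) + 1)"
      using cCrit dom1 by simp
    moreover have "slope_r v \<alpha> n \<mu> I \<ge> real_of_int (\<mu> n - \<mu> (n+1) + 1)"
    proof -
      have ii: "int (2*n) - 1 + w - (\<mu> (n+1) + int n - 1) - (\<mu> (n+2) + int n - 2) \<ge> \<mu> n - \<mu>(n+1) + 1"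
        using pn dom1 by linarith
      then have "real_of_int (int (2*n) - 1 + w - (\<mu> (n+1) + int n - 1) - (\<mu> (n+2) + int n - 2)) \<ge> real_of_int (\<mu> n - \<mu>(n+1) + 1)"
        by (simp only: of_int_le_iff)
      then have X: "real_of_int (int (2*n) - 1 + w) - h (n+1) - h (n+2) \<ge> real_of_int (\<mu> n - \<mu>(n+1) + 1)"
        unfolding hn(2,3) by (simp only: of_int_diff)
      have Y: "sum a J \<ge> sum h {n+3..2*n}" using S1 S2 unfolding e by linarith
      show ?thesis using r sumI akk Hlow X Y by linarith
    qed
    ultimately show False using NC unfolding non_critical_slope_def by linarith
  qed
qed

end
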